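(* Let $f_1,\dots,f_m\in\mathbb{R}[x_1,\dots,x_n]$ and $\sigma=(\sigma_1,\dots,\sigma_m)\in\{\le,<,=,>,\ge\}^m$, and set $E_\sigma=\{i:\sigma_i\text{ is }``="\}$. Then for every connected component $C$ of $\{x\in\mathbb{R}^n:f_1(x)\sigma_10,\dots,f_m(x)\sigma_m0\}$, $$Z(C)\subset\bigcup_{E_\sigma\subset S\subset\{1,\dots,m\},\ S\ne\emptyset}\pi_x(W_S).$$
   Context: For nonempty $A\subset\mathbb{R}^n$ with closure $\overline A$ and $\pi_1$ the first coordinate projection: $Z_{\inf}(A)=\{x\in\overline A:x_1=\inf\pi_1(A)\}$ if $\pi_1(A)$ is bounded below (else $\emptyset$), $Z_{\sup}(A)=\{x\in\overline A:x_1=\sup\pi_1(A)\}$ if $\pi_1(A)$ is bounded above (else $\emptyset$), $Z(A)=Z_{\inf}(A)\cup Z_{\sup}(A)$. For $S=\{i_1,\dots,i_s\}\subset\{1,\dots,m\}$: if $s=1$, $W_S=\{z\in\mathbb{C}^n: f_{i_1}(z)=\frac{\partial f_{i_1}}{\partial x_2}(z)=\dots=\frac{\partial f_{i_1}}{\partial x_n}(z)=0\}$; if $2\le s\le n-1$, $W_S\subset\mathbb{C}^n\times\mathbb{P}^{s-1}$ is the set of $(z,(\mu_1:\dots:\mu_s))$ with $f_{i_1}(z)=\dots=f_{i_s}(z)=0$ and $\sum_{j=1}^s\mu_j\frac{\partial f_{i_j}}{\partial x_k}(z)=0$ for $k=2,\dots,n$; if $s\ge n$, $W_S=\{z\in\mathbb{C}^n:f_{i_1}(z)=\dots=f_{i_s}(z)=0\}$.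 $\pi_x$ denotes the projection onto the $x$-coordinates (the identity when $W_S\subset\mathbb{C}^n$), and $\mathbb{R}^n$ is viewed inside $\mathbb{C}^n$. *)

theory Defs
  imports "HOL-Analysis.Analysis"
begin

text \<open>Real polynomials in the variables indexed by the finite type 'n, represented by
their coefficient functions on monomials (exponent vectors 'n => nat) with finite support.\<close>

type_synonym 'n rpoly = "('n \<Rightarrow> nat) \<Rightarrow> real"

definition is_rpoly :: "'n rpoly \<Rightarrow> bool" where
  "is_rpoly p \<longleftrightarrow> finite {\<alpha>. p \<alpha> \<noteq> 0}"

definition peval :: "('n::finite) rpoly \<Rightarrow> 'a::{real_algebra_1,comm_ring_1} ^ 'n \<Rightarrow> 'a" where
  "peval p z = (\<Sum>\<alpha>\<in>{\<alpha>. p \<alpha> \<noteq> 0}. of_real (p \<alpha>) * (\<Prod>i\<in>UNIV. (z $ i) ^ \<alpha> i))"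

definition pdiff :: "'n \<Rightarrow> 'n rpoly \<Rightarrow> 'n rpoly" where
  "pdiff k p = (\<lambda>\<alpha>. of_nat (\<alpha> k + 1) * p (\<alpha>(k := \<alpha> k + 1)))"

definition first_coord :: "'n::wellorder" where
  "first_coord = (LEAST i. True)"

datatype rel = Le | Lt | Eq | Gt | Ge

fun sat :: "rel \<Rightarrow> real \<Rightarrow> bool" where
  "sat Le v = (v \<le> 0)"
| "sat Lt v = (v < 0)"
| "sat Eq v = (v = 0)"
| "sat Gt v = (v > 0)"
| "sat Ge v = (v \<ge> 0)"

definition semialg :: "(nat \<Rightarrow> ('n::finite) rpoly) \<Rightarrow> (nat \<Rightarrow> rel) \<Rightarrow> nat \<Rightarrow> (real ^ 'n) set" where
  "semialg f \<sigma> m = {x. \<forall>i\<in>{1..m}. sat (\<sigma> i) (peval (f i) x)}"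

definition Eset :: "(nat \<Rightarrow> rel) \<Rightarrow> nat \<Rightarrow> nat set" where
  "Eset \<sigma> m = {i\<in>{1..m}. \<sigma> i = Eq}"

definition Zinf :: "(real ^ ('n::{finite,wellorder})) set \<Rightarrow> (real ^ ('n::{finite,wellorder})) set" where
  "Zinf A = (if bdd_below ((\<lambda>x. x $ first_coord) ` A)
             then {x\<in>closure A. x $ first_coord = Inf ((\<lambda>x. x $ first_coord) ` A)} else {})"

definition Zsup :: "(real ^ ('n::{finite,wellorder})) set \<Rightarrow> (real ^ ('n::{finite,wellorder})) set" where
  "Zsup A = (if bdd_above ((\<lambda>x. x $ first_coord) ` A)
             then {x\<in>closure A. x $ first_coord = Sup ((\<lambda>x. x $ first_coord) ` A)} else {})"

definition Zset :: "(real ^ ('n::{finite,wellorder})) set \<Rightarrow> (real ^ ('n::{finite,wellorder})) set" where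
  "Zset A = Zinf A \<union> Zsup A"

text \<open>piW f S is the projection onto the x-coordinates of the set W_S (a subset of C^n).
For 2 <= |S| <= n-1 the projective point (mu_1 : ... : mu_s) is represented by a nonzero
vector mu indexed by S (projection = existence of such a mu).\<close>
definition piW :: "(nat \<Rightarrow> ('n::{finite,wellorder}) rpoly) \<Rightarrow> nat set \<Rightarrow> (complex ^ ('n::{finite,wellorder})) set" where
  "piW f S =
    (if card S = 1 then
       {z. \<forall>i\<in>S. peval (f i) z = 0 \<and> (\<forall>k. k \<noteq> first_coord \<longrightarrow> peval (pdiff k (f i)) z = 0)}
     else if 2 \<le> card S \<and> card S \<le> CARD('n::{finite,wellorder}) - 1 then
       {z. (\<forall>i\<in>S. peval (f i) z = 0) \<and>
           (\<exists>\<mu>::nat \<Rightarrow> complex. (\<exists>j\<in>S. \<mu> j \<noteq> 0) \<and>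
              (\<forall>k. k \<noteq> first_coord \<longrightarrow> (\<Sum>j\<in>S. \<mu> j * peval (pdiff k (f j)) z) = 0))}
     else
       {z. \<forall>i\<in>S. peval (f i) z = 0})"

definition cvec :: "real ^ 'n \<Rightarrow> complex ^ 'n" where
  "cvec x = (\<chi> i. complex_of_real (x $ i))"

end

theory Submission
  imports Defs
begin

definition mono :: "('n::finite \<Rightarrow> nat) \<Rightarrow> real^'n \<Rightarrow> real" where
  "mono \<alpha> z = (\<Prod>i\<in>UNIV. (z $ i) ^ \<alpha> i)"

lemma aux: "(a::real)*(r*c*P) = r*a*(c*P)" by (simp add: mult_ac)

lemma mono_deriv:
  fixes z :: "real^'n::finite"
  shows "((mono \<alpha>) has_derivative
     (\<lambda>h. \<Sum>k\<in>UNIV. of_nat (\<alpha> k) * h$k * (z$k)^(\<alpha> k - 1) * (\<Prod>j\<in>UNIV-{k}. (z$j)^\<alpha> j))) (at z)"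
proof -
  have "\<And>i. ((\<lambda>x::real^'n. x $ i) has_derivative (\<lambda>x. x $ i)) (at z)"
    by (rule bounded_linear_imp_has_derivative[OF bounded_linear_vec_nth])
  then have "\<And>i. ((\<lambda>x::real^'n. (x $ i)^\<alpha> i) has_derivative (\<lambda>y. of_nat (\<alpha> i) * y $ i * (z$i)^(\<alpha> i - 1))) (at z)"
    by (rule has_derivative_power)
  from has_derivative_prod[of UNIV, OF this]
  show ?thesis unfolding mono_def by simp
qed

lemma peval_real: "peval p (z::real^'n::finite) = (\<Sum>\<alpha>\<in>{\<alpha>. p \<alpha> \<noteq> 0}. p \<alpha> * mono \<alpha> z)"
  unfolding peval_def mono_def by simp

lemma is_rpoly_pdiff: "is_rpoly p \<Longrightarrow> is_rpoly (pdiff k p)"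
proof -
  assume "is_rpoly p"
  then have fin: "finite {\<alpha>. p \<alpha> \<noteq> 0}" by (simp add: is_rpoly_def)
  have inj: "inj (\<lambda>\<alpha>::_ \<Rightarrow> nat. \<alpha>(k := \<alpha> k + 1))"
  proof (rule injI, rule ext)
    fix a b :: "_ \<Rightarrow> nat" and j assume h: "a(k := a k + 1) = b(k := b k + 1)"
    show "a j = b j" using fun_cong[OF h, of j] fun_cong[OF h, of k] by (cases "j = k") auto
  qed
  have "{\<alpha>. pdiff k p \<alpha> \<noteq> 0} \<subseteq> (\<lambda>\<alpha>. \<alpha>(k := \<alpha> k + 1)) -` {\<alpha>. p \<alpha> \<noteq> 0}"
    by (auto simp: pdiff_def)
  moreover have "finite ((\<lambda>\<alpha>. \<alpha>(k := \<alpha> k + 1)) -` {\<alpha>. p \<alpha> \<noteq> 0})"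
    using finite_vimageI[OF fin inj] .
  ultimately show ?thesis unfolding is_rpoly_def using finite_subset by blast
qed

lemma pdiff_eval:
  assumes "is_rpoly p"
  shows "peval (pdiff k p) (z::real^'n::finite) =
    (\<Sum>\<alpha>\<in>{\<alpha>. p \<alpha> \<noteq> 0}. p \<alpha> * (of_nat (\<alpha> k) * (z$k)^(\<alpha> k - 1) * (\<Prod>j\<in>UNIV-{k}. (z$j)^\<alpha> j)))"
proof -
  have fin: "finite {\<alpha>. p \<alpha> \<noteq> 0}" using assms by (simp add: is_rpoly_def)
  let ?T = "\<lambda>\<alpha>. p \<alpha> * (of_nat (\<alpha> k) * (z$k)^(\<alpha> k - 1) * (\<Prod>j\<in>UNIV-{k}. (z$j)^\<alpha> j))"
  have "(\<Sum>\<alpha>\<in>{\<alpha>. p \<alpha> \<noteq> 0}. ?T \<alpha>) = (\<Sum>\<alpha>\<in>{\<alpha>. p \<alpha> \<noteq> 0 \<and> \<alpha> k \<noteq> 0}. ?T \<alpha>)"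
    by (rule sum.mono_neutral_right) (use fin in auto)
  also have "\<dots> = (\<Sum>\<beta>\<in>{\<beta>. pdiff k p \<beta> \<noteq> 0}. pdiff k p \<beta> * mono \<beta> z)"
  proof (rule sym, rule sum.reindex_bij_witness[where j="\<lambda>\<beta>. \<beta>(k := \<beta> k + 1)" and i="\<lambda>\<alpha>. \<alpha>(k := \<alpha> k - 1)"])
    fix \<beta> assume b: "\<beta> \<in> {\<beta>. pdiff k p \<beta> \<noteq> 0}"
    show "\<beta>(k := \<beta> k + 1, k := (\<beta>(k := \<beta> k + 1)) k - 1) = \<beta>" by auto
    show "\<beta>(k := \<beta> k + 1) \<in> {\<alpha>. p \<alpha> \<noteq> 0 \<and> \<alpha> k \<noteq> 0}" using b by (simp add: pdiff_def)
    have "mono \<beta> z = (z$k)^(\<beta> k) * (\<Prod>j\<in>UNIV-{k}. (z$j)^\<beta> j)"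
      unfolding mono_def by (simp add: prod.remove)
    also have "(\<Prod>j\<in>UNIV-{k}. (z$j)^\<beta> j) = (\<Prod>j\<in>UNIV-{k}. (z$j)^((\<beta>(k := \<beta> k + 1)) j))"
      by (rule prod.cong) auto
    finally have m: "mono \<beta> z = (z$k)^(\<beta> k) * (\<Prod>j\<in>UNIV-{k}. (z$j)^((\<beta>(k := \<beta> k + 1)) j))" .
    show "?T (\<beta>(k := \<beta> k + 1)) = pdiff k p \<beta> * mono \<beta> z"
    proof -
      have e: "(\<beta>(k := \<beta> k + 1)) k - 1 = \<beta> k" "(\<beta>(k := \<beta> k + 1)) k = \<beta> k + 1" by simp_all
      show ?thesis unfolding m pdiff_def e(2) add_diff_cancel_right' by (rule aux)
    qed
  next
    fix \<alpha> assume a: "\<alpha> \<in> {\<alpha>. p \<alpha> \<noteq> 0 \<and> \<alpha> k \<noteq> 0}"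
    show "\<alpha>(k := \<alpha> k - 1, k := (\<alpha>(k := \<alpha> k - 1)) k + 1) = \<alpha>" using a by auto
    have "\<alpha>(k := \<alpha> k - 1, k := \<alpha> k - 1 + 1) = \<alpha>" using a by auto
    then show "\<alpha>(k := \<alpha> k - 1) \<in> {\<beta>. pdiff k p \<beta> \<noteq> 0}" using a by (simp add: pdiff_def)
  qed
  also have "\<dots> = peval (pdiff k p) z" by (simp add: peval_real)
  finally show ?thesis by simp
qed

lemma peval_deriv:
  assumes "is_rpoly p"
  shows "((\<lambda>z::real^'n::finite. peval p z) has_derivative (\<lambda>h. \<Sum>k\<in>UNIV. peval (pdiff k p) z * h$k)) (at z)"
proof -
  have "((\<lambda>z::real^'n::finite. \<Sum>\<alpha>\<in>{\<alpha>. p \<alpha> \<noteq> 0}. p \<alpha> * mono \<alpha> z) has_derivative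
     (\<lambda>h. \<Sum>\<alpha>\<in>{\<alpha>. p \<alpha> \<noteq> 0}. p \<alpha> * (\<Sum>k\<in>UNIV. of_nat (\<alpha> k) * h$k * (z$k)^(\<alpha> k - 1) * (\<Prod>j\<in>UNIV-{k}. (z$j)^\<alpha> j)))) (at z)"
    by (intro has_derivative_sum has_derivative_mult_right mono_deriv)
  moreover have "(\<lambda>h. \<Sum>\<alpha>\<in>{\<alpha>. p \<alpha> \<noteq> 0}. p \<alpha> * (\<Sum>k\<in>UNIV. of_nat (\<alpha> k) * h$k * (z$k)^(\<alpha> k - 1) * (\<Prod>j\<in>UNIV-{k}. (z$j)^\<alpha> j)))
     = (\<lambda>h. \<Sum>k\<in>UNIV. peval (pdiff k p) z * h$k)"
  proof
    fix h :: "real^'n"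
    show "(\<Sum>\<alpha>\<in>{\<alpha>. p \<alpha> \<noteq> 0}. p \<alpha> * (\<Sum>k\<in>UNIV. of_nat (\<alpha> k) * h$k * (z$k)^(\<alpha> k - 1) * (\<Prod>j\<in>UNIV-{k}. (z$j)^\<alpha> j)))
     = (\<Sum>k\<in>UNIV. peval (pdiff k p) z * h$k)"
    proof -
      have "(\<Sum>\<alpha>\<in>{\<alpha>. p \<alpha> \<noteq> 0}. p \<alpha> * (\<Sum>k\<in>UNIV. of_nat (\<alpha> k) * h$k * (z$k)^(\<alpha> k - 1) * (\<Prod>j\<in>UNIV-{k}. (z$j)^\<alpha> j)))
         = (\<Sum>\<alpha>\<in>{\<alpha>. p \<alpha> \<noteq> 0}. \<Sum>k\<in>UNIV. p \<alpha> * (of_nat (\<alpha> k) * h$k * (z$k)^(\<alpha> k - 1) * (\<Prod>j\<in>UNIV-{k}. (z$j)^\<alpha> j)))"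
        by (simp only: sum_distrib_left)
      also have "\<dots> = (\<Sum>k\<in>UNIV. \<Sum>\<alpha>\<in>{\<alpha>. p \<alpha> \<noteq> 0}. p \<alpha> * (of_nat (\<alpha> k) * h$k * (z$k)^(\<alpha> k - 1) * (\<Prod>j\<in>UNIV-{k}. (z$j)^\<alpha> j)))"
        by (rule sum.swap)
      also have "\<dots> = (\<Sum>k\<in>UNIV. peval (pdiff k p) z * h$k)"
      proof (rule sum.cong[OF refl])
        fix k
        have "peval (pdiff k p) z * h$k = (\<Sum>\<alpha>\<in>{\<alpha>. p \<alpha> \<noteq> 0}. p \<alpha> * (of_nat (\<alpha> k) * (z$k)^(\<alpha> k - 1) * (\<Prod>j\<in>UNIV-{k}. (z$j)^\<alpha> j)) * h$k)"
          unfolding pdiff_eval[OF assms] by (simp only: sum_distrib_right)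
        also have "\<dots> = (\<Sum>\<alpha>\<in>{\<alpha>. p \<alpha> \<noteq> 0}. p \<alpha> * (of_nat (\<alpha> k) * h$k * (z$k)^(\<alpha> k - 1) * (\<Prod>j\<in>UNIV-{k}. (z$j)^\<alpha> j)))"
          by (rule sum.cong[OF refl]) (simp only: mult_ac)
        finally show "(\<Sum>\<alpha>\<in>{\<alpha>. p \<alpha> \<noteq> 0}. p \<alpha> * (of_nat (\<alpha> k) * h$k * (z$k)^(\<alpha> k - 1) * (\<Prod>j\<in>UNIV-{k}. (z$j)^\<alpha> j))) = peval (pdiff k p) z * h$k"
          by simp
      qed
      finally show ?thesis .
    qed
  qed
  ultimately show ?thesis by (simp add: peval_real)
qed

lemma peval_continuous:
  assumes "is_rpoly p" shows "continuous_on UNIV (\<lambda>z::real^'n::finite. peval p z)"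
proof (rule continuous_at_imp_continuous_on, rule ballI)
  fix z :: "real^'n" show "isCont (\<lambda>z::real^'n::finite. peval p z) z"
    using has_derivative_continuous[OF peval_deriv[OF assms]] .
qed

lemma peval_cvec: "peval p (cvec x) = complex_of_real (peval p x)"
  unfolding peval_def cvec_def by (simp add: of_real_sum of_real_prod)

lemma dual_one:
  fixes v :: "nat \<Rightarrow> real^'n::finite"
  assumes fin: "finite A" and ind: "\<forall>\<mu>. (\<Sum>j\<in>A. \<mu> j *\<^sub>R v j) = 0 \<longrightarrow> (\<forall>j\<in>A. \<mu> j = 0)"
    and ve: "\<forall>j\<in>A. v j $ e = 0" and i: "i \<in> A"
  shows "\<exists>b. b $ e = 0 \<and> (\<forall>j\<in>A. v j \<bullet> b = (if i = j then 1 else 0))"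
proof -
  have inj: "inj_on v A"
  proof (rule inj_onI)
    fix j k assume j: "j\<in>A" and k: "k\<in>A" and eq: "v j = v k"
    show "j = k"
    proof (rule ccontr)
      assume ne: "j \<noteq> k"
      let ?\<mu> = "\<lambda>l. if l = j then 1 else if l = k then -1 else (0::real)"
      have "(\<Sum>l\<in>A. ?\<mu> l *\<^sub>R v l) = (\<Sum>l\<in>A. (if l = j then v j else 0) - (if l = k then v k else 0))"
        by (rule sum.cong) (auto simp: ne)
      also have "\<dots> = v j - v k" using j k fin by (simp add: sum_subtractf)
      also have "\<dots> = 0" using eq by simp
      finally have h0: "(\<Sum>l\<in>A. ?\<mu> l *\<^sub>R v l) = 0" .
      have "(\<Sum>l\<in>A. ?\<mu> l *\<^sub>R v l) = 0 \<longrightarrow> (\<forall>l\<in>A. ?\<mu> l = 0)"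
        by (rule spec[where x="?\<mu>", OF ind])
      then have "\<forall>l\<in>A. ?\<mu> l = 0" using h0 by blast
      then show False using j by auto
    qed
  qed
  obtain y z where y: "y \<in> span (v ` (A - {i}))"
    and z: "\<And>w. w \<in> span (v ` (A - {i})) \<Longrightarrow> orthogonal z w" and vi: "v i = y + z"
    using orthogonal_subspace_decomp_exists[of "v ` (A - {i})" "v i"] by blast
  have z0: "z \<noteq> 0"
  proof
    assume "z = 0"
    then have "v i \<in> span (v ` (A - {i}))" using y vi by simp
    then obtain u where u: "v i = (\<Sum>w\<in>v ` (A - {i}). u w *\<^sub>R w)"
      using span_finite[of "v ` (A - {i})"] fin by auto
    also have "\<dots> = (\<Sum>l\<in>A - {i}. u (v l) *\<^sub>R v l)"
      by (subst sum.reindex) (use inj_on_subset[OF inj] in auto)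
    finally have vi2: "v i = (\<Sum>l\<in>A - {i}. u (v l) *\<^sub>R v l)" .
    let ?\<mu> = "\<lambda>l. if l = i then 1 else - u (v l)"
    have "(\<Sum>l\<in>A. ?\<mu> l *\<^sub>R v l) = ?\<mu> i *\<^sub>R v i + (\<Sum>l\<in>A - {i}. ?\<mu> l *\<^sub>R v l)"
      using fin i by (simp add: sum.remove)
    also have "(\<Sum>l\<in>A - {i}. ?\<mu> l *\<^sub>R v l) = (\<Sum>l\<in>A - {i}. - (u (v l) *\<^sub>R v l))"
      by (rule sum.cong) auto
    also have "\<dots> = - (\<Sum>l\<in>A - {i}. u (v l) *\<^sub>R v l)" by (simp add: sum_negf)
    finally have "(\<Sum>l\<in>A. ?\<mu> l *\<^sub>R v l) = 0" using vi2 by simp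
    moreover have "(\<Sum>l\<in>A. ?\<mu> l *\<^sub>R v l) = 0 \<longrightarrow> (\<forall>l\<in>A. ?\<mu> l = 0)"
      by (rule spec[where x="?\<mu>", OF ind])
    ultimately have "\<forall>l\<in>A. ?\<mu> l = 0" by blast
    then show False using i by auto
  qed
  have orth: "\<And>j. j \<in> A \<Longrightarrow> j \<noteq> i \<Longrightarrow> v j \<bullet> z = 0"
  proof -
    fix j assume "j \<in> A" "j \<noteq> i"
    then have "v j \<in> span (v ` (A - {i}))" by (intro span_base) auto
    then have "orthogonal z (v j)" using z by blast
    then show "v j \<bullet> z = 0" by (metis inner_commute orthogonal_def)
  qed
  have yz: "y \<bullet> z = 0" using z[OF y] by (metis inner_commute orthogonal_def)
  have viz: "v i \<bullet> z = z \<bullet> z" using vi yz by (simp add: inner_add_left)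
  have zz: "z \<bullet> z \<noteq> 0" using z0 by simp
  have sub: "subspace {h::real^'n. h $ e = 0}"
    by (rule subspaceI) auto
  have "v ` (A - {i}) \<subseteq> {h::real^'n. h $ e = 0}" using ve by auto
  from span_minimal[OF this sub] y have ye: "y $ e = 0" by auto
  have ze: "z $ e = 0" using vi ve i ye by (metis add_0 vector_add_component)
  show ?thesis
  proof (intro exI[of _ "inverse (z \<bullet> z) *\<^sub>R z"] conjI ballI)
    show "(inverse (z \<bullet> z) *\<^sub>R z) $ e = 0" using ze by simp
    fix j assume j: "j \<in> A"
    show "v j \<bullet> (inverse (z \<bullet> z) *\<^sub>R z) = (if i = j then 1 else 0)"
      using orth[OF j] viz zz by (cases "i = j") auto
  qed
qed

lemma dual_all:
  fixes v :: "nat \<Rightarrow> real^'n::finite"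
  assumes fin: "finite A" and ind: "\<forall>\<mu>. (\<Sum>j\<in>A. \<mu> j *\<^sub>R v j) = 0 \<longrightarrow> (\<forall>j\<in>A. \<mu> j = 0)"
    and ve: "\<forall>j\<in>A. v j $ e = 0"
  shows "\<exists>b. \<forall>i\<in>A. b i $ e = 0 \<and> (\<forall>j\<in>A. v j \<bullet> b i = (if i = j then 1 else 0))"
proof -
  have "\<forall>i\<in>A. \<exists>b. b $ e = 0 \<and> (\<forall>j\<in>A. v j \<bullet> b = (if i = j then 1 else 0))"
    using dual_one[OF fin ind ve] by blast
  then show ?thesis by (rule bchoice)
qed

fun satc :: "rel \<Rightarrow> real \<Rightarrow> bool" where
  "satc Le v = (v \<le> 0)"
| "satc Lt v = (v \<le> 0)"
| "satc Eq v = (v = 0)"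
| "satc Gt v = (v \<ge> 0)"
| "satc Ge v = (v \<ge> 0)"

lemma sat_satc: "sat r v \<Longrightarrow> satc r v"
  by (cases r) auto

lemma satc_sat: "satc r v \<Longrightarrow> 0 < w * v \<Longrightarrow> sat r w"
  by (cases r) (auto simp: zero_less_mult_iff)

lemma closed_satc:
  assumes "continuous_on UNIV (P :: real^'n::finite \<Rightarrow> real)"
  shows "closed {z. satc r (P z)}"
  using assms by (cases r) (auto intro!: closed_Collect_le closed_Collect_eq continuous_on_const)

lemma closure_semialg:
  assumes polys: "\<forall>i\<in>{1..m}. is_rpoly (f i)"
  shows "closure (semialg f \<sigma> m) \<subseteq> {z. \<forall>i\<in>{1..m}. satc (\<sigma> i) (peval (f i) z)}"
proof (rule closure_minimal)
  show "semialg f \<sigma> m \<subseteq> {z. \<forall>i\<in>{1..m}. satc (\<sigma> i) (peval (f i) z)}"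
    by (auto simp: semialg_def sat_satc)
  have "{z. \<forall>i\<in>{1..m}. satc (\<sigma> i) (peval (f i) z)} = (\<Inter>i\<in>{1..m}. {z. satc (\<sigma> i) (peval (f i) z)})"
    by auto
  also have "closed \<dots>"
    using polys by (intro closed_INT ballI closed_satc peval_continuous) auto
  finally show "closed {z. \<forall>i\<in>{1..m}. satc (\<sigma> i) (peval (f i) z)}" .
qed

lemma core:
  fixes f :: "nat \<Rightarrow> ('n::{finite,wellorder}) rpoly" and x :: "real^('n::{finite,wellorder})"
  assumes polys: "\<forall>i\<in>{1..m}. is_rpoly (f i)"
    and C: "C \<in> components (semialg f \<sigma> m)"
    and xcl: "x \<in> closure C"
    and s: "s = 1 \<or> s = -1"
    and ext: "\<forall>y\<in>C. s * x$first_coord \<le> s * y$first_coord"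
    and indep: "\<forall>\<mu>. (\<forall>k. k \<noteq> first_coord \<longrightarrow>
        (\<Sum>j\<in>{i\<in>{1..m}. peval (f i) x = 0}. \<mu> j * peval (pdiff k (f j)) x) = 0)
        \<longrightarrow> (\<forall>j\<in>{i\<in>{1..m}. peval (f i) x = 0}. \<mu> j = 0)"
  shows False
proof -
  define e where "e = (first_coord :: 'n)"
  define A where "A = {i\<in>{1..m}. peval (f i) x = 0}"
  define T where "T = semialg f \<sigma> m"
  define v where "v j = (\<chi> k. if k = e then 0 else peval (pdiff k (f j)) x)" for j
  have finA: "finite A" unfolding A_def by auto
  have Asub: "A \<subseteq> {1..m}" unfolding A_def by auto
  have polyA: "\<And>i. i \<in> A \<Longrightarrow> is_rpoly (f i)" using polys Asub by auto
  have ve: "\<forall>j\<in>A. v j $ e = 0" by (simp add: v_def)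
  have ind: "\<forall>\<mu>. (\<Sum>j\<in>A. \<mu> j *\<^sub>R v j) = 0 \<longrightarrow> (\<forall>j\<in>A. \<mu> j = 0)"
  proof (intro allI impI)
    fix \<mu> :: "nat \<Rightarrow> real" assume h: "(\<Sum>j\<in>A. \<mu> j *\<^sub>R v j) = 0"
    have "\<forall>k. k \<noteq> first_coord \<longrightarrow> (\<Sum>j\<in>A. \<mu> j * peval (pdiff k (f j)) x) = 0"
    proof (intro allI impI)
      fix k :: 'n assume k: "k \<noteq> first_coord"
      have "(\<Sum>j\<in>A. \<mu> j *\<^sub>R v j) $ k = 0" using h by simp
      then show "(\<Sum>j\<in>A. \<mu> j * peval (pdiff k (f j)) x) = 0" using k by (simp add: v_def e_def)
    qed
    then show "\<forall>j\<in>A. \<mu> j = 0" using indep unfolding A_def by blast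
  qed
  obtain b where b: "\<forall>i\<in>A. b i $ e = 0 \<and> (\<forall>j\<in>A. v j \<bullet> b i = (if i = j then 1 else 0))"
    using dual_all[OF finA ind ve] by blast
  define G where "G z = z + (\<Sum>i\<in>A. (peval (f i) z - v i \<bullet> z) *\<^sub>R b i)" for z
  define D where "D z h = h + (\<Sum>i\<in>A. ((\<Sum>k\<in>UNIV. peval (pdiff k (f i)) z * h$k) - v i \<bullet> h) *\<^sub>R b i)" for z h
  have hasD: "(G has_derivative D z) (at z)" for z
  proof -
    have "\<And>i. i\<in>A \<Longrightarrow> ((\<lambda>z. peval (f i) z - v i \<bullet> z) has_derivative
        (\<lambda>h. (\<Sum>k\<in>UNIV. peval (pdiff k (f i)) z * h$k) - v i \<bullet> h)) (at z)"
      by (intro has_derivative_diff peval_deriv polyA bounded_linear_imp_has_derivative bounded_linear_inner_right)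
    then have "((\<lambda>z. \<Sum>i\<in>A. (peval (f i) z - v i \<bullet> z) *\<^sub>R b i) has_derivative
        (\<lambda>h. \<Sum>i\<in>A. ((\<Sum>k\<in>UNIV. peval (pdiff k (f i)) z * h$k) - v i \<bullet> h) *\<^sub>R b i)) (at z)"
      by (intro has_derivative_sum has_derivative_scaleR_left)
    then show ?thesis unfolding G_def D_def by (intro has_derivative_add has_derivative_ident)
  qed
  have blD: "bounded_linear (D z)" for z using hasD has_derivative_bounded_linear by blast
  define D' where "D' z = Blinfun (D z)" for z
  have D'apply: "blinfun_apply (D' z) = D z" for z
    unfolding D'_def using blD by (rule bounded_linear_Blinfun_apply)
  have contD: "continuous_on UNIV D'"
  proof (rule continuous_on_blinfun_componentwise)
    fix w :: "real^('n::{finite,wellorder})" 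
    show "continuous_on UNIV (\<lambda>z. blinfun_apply (D' z) w)"
      unfolding D'apply D_def
      by (intro continuous_intros peval_continuous is_rpoly_pdiff polyA) auto
  qed
  define u where "u = (\<Sum>i\<in>A. peval (pdiff e (f i)) x *\<^sub>R b i)"
  have ue: "u $ e = 0" using b by (simp add: u_def)
  have key: "(\<Sum>k\<in>UNIV. peval (pdiff k (f i)) x * h$k) - v i \<bullet> h = peval (pdiff e (f i)) x * h$e" for i h
  proof -
    have "v i \<bullet> h = (\<Sum>k\<in>UNIV. (if k = e then 0 else peval (pdiff k (f i)) x) * h$k)"
      by (simp add: inner_vec_def v_def)
    then have "(\<Sum>k\<in>UNIV. peval (pdiff k (f i)) x * h$k) - v i \<bullet> h =
       (\<Sum>k\<in>UNIV. peval (pdiff k (f i)) x * h$k - (if k = e then 0 else peval (pdiff k (f i)) x) * h$k)"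
      by (simp add: sum_subtractf)
    also have "\<dots> = (\<Sum>k\<in>UNIV. if k = e then peval (pdiff e (f i)) x * h$e else 0)"
      by (rule sum.cong) auto
    finally show ?thesis by simp
  qed
  have Dx: "D x h = h + (h$e) *\<^sub>R u" for h
    unfolding D_def key u_def by (simp add: scaleR_sum_right mult.commute)
  have blinv: "bounded_linear (\<lambda>h::real^('n::{finite,wellorder}). h - (h$e) *\<^sub>R u)"
    by (intro bounded_linear_sub bounded_linear_ident bounded_linear_compose[OF bounded_linear_scaleR_left bounded_linear_vec_nth])
  define invf where "invf = Blinfun (\<lambda>h::real^('n::{finite,wellorder}). h - (h$e) *\<^sub>R u)"
  have inv: "invf o\<^sub>L D' x = id_blinfun"
    by (rule blinfun_eqI) (simp add: invf_def bounded_linear_Blinfun_apply[OF blinv] D'apply Dx ue)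
  have derf: "\<And>z. z \<in> UNIV \<Longrightarrow> (G has_derivative blinfun_apply (D' z)) (at z)"
    using hasD D'apply by simp
  obtain U' V g where U': "open U'" "x \<in> U'" and V: "open V" "G x \<in> V"
    and hom: "homeomorphism U' V G g"
    using inverse_function_theorem[OF open_UNIV derf contD UNIV_I inv] by metis
  have gG: "\<And>z. z \<in> U' \<Longrightarrow> g (G z) = z" and Gg: "\<And>w. w \<in> V \<Longrightarrow> G (g w) = w"
    and gV: "g ` V = U'" and contg: "continuous_on V g"
    using hom by (auto simp: homeomorphism_def)
  have vG: "v j \<bullet> G z = peval (f j) z" if j: "j \<in> A" for j z
  proof -
    have "v j \<bullet> G z = v j \<bullet> z + (\<Sum>i\<in>A. (peval (f i) z - v i \<bullet> z) * (if i = j then 1 else 0))"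
      using b j by (simp add: G_def inner_add_right inner_sum_right)
    also have "(\<Sum>i\<in>A. (peval (f i) z - v i \<bullet> z) * (if i = j then 1 else 0)) = 
        (\<Sum>i\<in>A. if i = j then (peval (f i) z - v i \<bullet> z) else 0)"
      by (rule sum.cong) auto
    also have "\<dots> = peval (f j) z - v j \<bullet> z" using j finA by simp
    finally show ?thesis by simp
  qed
  have Ge: "G z $ e = z $ e" for z
    using b by (simp add: G_def)
  have contG: "continuous_on UNIV G"
    using hasD has_derivative_continuous continuous_at_imp_continuous_on by blast
  \<comment> \<open>open neighbourhood where inactive constraints hold strictly\<close>
  define Onb where "Onb = (\<Inter>i\<in>{1..m} - A. {z. 0 < peval (f i) z * peval (f i) x})"
  have openOnb: "open Onb" unfolding Onb_def
    using polys by (intro open_INT ballI finite_Diff open_Collect_less continuous_intros peval_continuous) auto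
  have Tcl: "closure T \<subseteq> {z. \<forall>i\<in>{1..m}. satc (\<sigma> i) (peval (f i) z)}"
    unfolding T_def by (rule closure_semialg[OF polys])
  have CT: "C \<subseteq> T" using C in_components_subset unfolding T_def by blast
  have xT: "x \<in> closure T" using xcl closure_mono[OF CT] by blast
  have xsatc: "\<forall>i\<in>{1..m}. satc (\<sigma> i) (peval (f i) x)" using xT Tcl by blast
  have xO: "x \<in> Onb" unfolding Onb_def A_def by (auto simp: zero_less_mult_iff linorder_neq_iff)
  have Osat: "\<And>z i. z \<in> Onb \<Longrightarrow> i \<in> {1..m} - A \<Longrightarrow> sat (\<sigma> i) (peval (f i) z)"
    using xsatc satc_sat unfolding Onb_def by blast
  have "open (V \<inter> g -` Onb)" using continuous_open_preimage[OF contg V(1) openOnb] .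
  moreover have "G x \<in> V \<inter> g -` Onb" using V(2) gG[OF U'(2)] xO by simp
  ultimately obtain r where r: "r > 0" "ball (G x) r \<subseteq> V \<inter> g -` Onb"
    using open_contains_ball by blast
  define N where "N = U' \<inter> G -` ball (G x) (r/2)"
  have openN: "open N" unfolding N_def
    using continuous_open_preimage[OF contG open_UNIV open_ball] U'(1) by (simp add: Int_absorb1 open_Int)
  have xN: "x \<in> N" unfolding N_def using U'(2) r(1) by simp
  have "N \<inter> C \<noteq> {}"
    using open_Int_closure_eq_empty[OF openN, of C] xcl xN by blast
  then obtain y where yN: "y \<in> N" and yC: "y \<in> C" by blast
  have yU: "y \<in> U'" and dy: "dist (G x) (G y) < r/2" using yN unfolding N_def by auto
  have CC: "C = connected_component_set T y"
    using C yC unfolding T_def by (metis components_iff connected_component_eq)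
  define w where "w t = G y - (t * s) *\<^sub>R axis e 1" for t
  have wball: "w t \<in> ball (G x) r" if t: "t \<in> {0..r/2}" for t
  proof -
    have "norm ((t * s) *\<^sub>R axis e (1::real)) = \<bar>t\<bar>" using s by auto
    also have "\<dots> \<le> r/2" using t by auto
    finally have "dist (G y) (w t) \<le> r/2" unfolding w_def by (simp add: dist_norm)
    then show ?thesis using dy dist_triangle[of "G x" "w t" "G y"] by simp
  qed
  define P where "P = g ` w ` {0..r/2}"
  have contw: "continuous_on {0..r/2} w" unfolding w_def by (intro continuous_intros)
  have wV: "w ` {0..r/2} \<subseteq> V" using wball r(2) by blast
  have connP: "connected P" unfolding P_def
    by (intro connected_continuous_image continuous_on_subset[OF contg wV] contw connected_Icc)
  have PT: "P \<subseteq> T"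
  proof
    fix z assume "z \<in> P"
    then obtain t where t: "t \<in> {0..r/2}" and z: "z = g (w t)" unfolding P_def by blast
    have wt: "w t \<in> V" "g (w t) \<in> Onb" using wball[OF t] r(2) by auto
    have GZ: "G z = w t" using Gg[OF wt(1)] z by simp
    have ySat: "\<forall>i\<in>{1..m}. sat (\<sigma> i) (peval (f i) y)" using yC CT unfolding T_def semialg_def by blast
    show "z \<in> T" unfolding T_def semialg_def
    proof (intro CollectI ballI)
      fix i assume i: "i \<in> {1..m}"
      show "sat (\<sigma> i) (peval (f i) z)"
      proof (cases "i \<in> A")
        case True
        have "peval (f i) z = v i \<bullet> G z" using vG[OF True] by simp
        also have "\<dots> = v i \<bullet> G y" using GZ ve True by (simp add: w_def inner_diff_right inner_axis)
        also have "\<dots> = peval (f i) y" using vG[OF True] by simp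
        finally show ?thesis using ySat i by simp
      next
        case False
        then show ?thesis using Osat wt(2) z i by blast
      qed
    qed
  qed
  have yP: "y \<in> P" unfolding P_def
  proof -
    have "w 0 = G y" by (simp add: w_def)
    then have "g (w 0) = y" using gG[OF yU] by simp
    moreover have "(0::real) \<in> {0..r/2}" using r(1) by simp
    ultimately show "y \<in> g ` w ` {0..r/2}" by (metis image_eqI)
  qed
  have PC: "P \<subseteq> C" unfolding CC by (rule connected_component_maximal[OF yP connP PT])
  define zz where "zz = g (w (r/2))"
  have zzC: "zz \<in> C" using PC r(1) unfolding zz_def P_def by auto
  have "G zz = w (r/2)" unfolding zz_def using Gg wball[of "r/2"] r by auto
  then have "zz $ e = y $ e - r/2 * s" using Ge[of zz] Ge[of y] by (simp add: w_def)
  then have sz: "s * zz $ e = s * y $ e - r/2" using s by auto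
  have "\<bar>(G y - G x) $ e\<bar> < r/2" using component_le_norm_cart[of "G y - G x" e] dy
    by (simp add: dist_norm norm_minus_commute)
  then have "\<bar>y $ e - x $ e\<bar> < r/2" using Ge[of x] Ge[of y] by simp
  then have "s * y $ e < s * x $ e + r/2" using s abs_less_iff[of "y$e - x$e" "r/2"] by auto
  with sz have "s * zz $ e < s * x $ e" by simp
  with ext zzC show False unfolding e_def by fastforce
qed

lemma piW1: "card S = 1 \<Longrightarrow> piW f S =
  {z. \<forall>i\<in>S. peval (f i) z = 0 \<and> (\<forall>k. k \<noteq> first_coord \<longrightarrow> peval (pdiff k (f i)) z = 0)}"
  unfolding piW_def by (simp only: if_True if_False simp_thms)

lemma piW2: "card S \<noteq> 1 \<Longrightarrow> 2 \<le> card S \<and> card S \<le> CARD('n::{finite,wellorder}) - 1 \<Longrightarrow> piW f S =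
       {z. (\<forall>i\<in>S. peval (f i) z = 0) \<and>
           (\<exists>\<mu>::nat \<Rightarrow> complex. (\<exists>j\<in>S. \<mu> j \<noteq> 0) \<and>
              (\<forall>k. k \<noteq> (first_coord::'n) \<longrightarrow> (\<Sum>j\<in>S. \<mu> j * peval (pdiff k (f j)) z) = 0))}"
  unfolding piW_def by (simp only: if_True if_False simp_thms)

lemma piW3: "card S \<noteq> 1 \<Longrightarrow> \<not> (2 \<le> card S \<and> card S \<le> CARD('n::{finite,wellorder}) - 1) \<Longrightarrow>
   piW (f :: nat \<Rightarrow> 'n rpoly) S = {z. \<forall>i\<in>S. peval (f i) z = 0}"
  unfolding piW_def by (simp only: if_True if_False simp_thms)

theorem mainTheorem8:
  fixes f :: "nat \<Rightarrow> ('n::{finite,wellorder}) rpoly" and \<sigma> :: "nat \<Rightarrow> rel" and m :: nat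
    and C :: "(real ^ ('n::{finite,wellorder})) set"
  assumes "\<forall>i\<in>{1..m}. is_rpoly (f i)"
    and "C \<in> components (semialg f \<sigma> m)"
  shows "Zset C \<subseteq> (\<Union>S\<in>{S. Eset \<sigma> m \<subseteq> S \<and> S \<subseteq> {1..m} \<and> S \<noteq> {}}. {x. cvec x \<in> piW f S})"
proof
  note polys = assms(1) and C = assms(2)
  fix x assume xZ: "x \<in> Zset C"
  obtain s where s: "s = 1 \<or> s = -1" and xcl: "x \<in> closure C"
    and ext: "\<forall>y\<in>C. s * x$first_coord \<le> s * y$first_coord"
  proof -
    from xZ consider "x \<in> Zinf C" | "x \<in> Zsup C" unfolding Zset_def by blast
    then show thesis
    proof cases
      case 1
      then have bdd: "bdd_below ((\<lambda>x. x $ first_coord) ` C)" and xc: "x \<in> closure C"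
        and xe: "x $ first_coord = Inf ((\<lambda>x. x $ first_coord) ` C)"
        unfolding Zinf_def by (auto split: if_splits)
      have "\<forall>y\<in>C. 1 * x$first_coord \<le> 1 * y$first_coord" using xe cInf_lower[OF _ bdd] by auto
      then show thesis using that[of 1] xc by auto
    next
      case 2
      then have bdd: "bdd_above ((\<lambda>x. x $ first_coord) ` C)" and xc: "x \<in> closure C"
        and xe: "x $ first_coord = Sup ((\<lambda>x. x $ first_coord) ` C)"
        unfolding Zsup_def by (auto split: if_splits)
      have "\<forall>y\<in>C. (-1) * x$first_coord \<le> (-1) * y$first_coord" using xe cSup_upper[OF _ bdd] by auto
      then show thesis using that[of "-1"] xc by auto
    qed
  qed
  show "x \<in> (\<Union>S\<in>{S. Eset \<sigma> m \<subseteq> S \<and> S \<subseteq> {1..m} \<and> S \<noteq> {}}. {x. cvec x \<in> piW f S})"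
  proof (rule ccontr)
    assume nx: "x \<notin> (\<Union>S\<in>{S. Eset \<sigma> m \<subseteq> S \<and> S \<subseteq> {1..m} \<and> S \<noteq> {}}. {x. cvec x \<in> piW f S})"
    define A where "A = {i\<in>{1..m}. peval (f i) x = 0}"
    have CT: "C \<subseteq> semialg f \<sigma> m" using C in_components_subset by blast
    have xT: "x \<in> closure (semialg f \<sigma> m)" using xcl closure_mono[OF CT] by blast
    have xsatc: "\<forall>i\<in>{1..m}. satc (\<sigma> i) (peval (f i) x)" using xT closure_semialg[OF polys] by blast
    have EA: "Eset \<sigma> m \<subseteq> A"
    proof
      fix i assume "i \<in> Eset \<sigma> m"
      then have i: "i \<in> {1..m}" "\<sigma> i = Eq" by (auto simp: Eset_def)
      then show "i \<in> A" using xsatc unfolding A_def by force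
    qed
    have notin: "cvec x \<notin> piW f A" if ne: "A \<noteq> {}"
    proof
      assume cx: "cvec x \<in> piW f A"
      have "A \<in> {S. Eset \<sigma> m \<subseteq> S \<and> S \<subseteq> {1..m} \<and> S \<noteq> {}}" using EA ne unfolding A_def by blast
      then show False using nx cx by blast
    qed
    have zerosA: "\<forall>i\<in>A. peval (f i) (cvec x) = 0" unfolding A_def peval_cvec by simp
    have indep: "\<forall>\<mu>. (\<forall>k. k \<noteq> first_coord \<longrightarrow> (\<Sum>j\<in>A. \<mu> j * peval (pdiff k (f j)) x) = 0)
        \<longrightarrow> (\<forall>j\<in>A. \<mu> j = 0)"
    proof (intro allI impI)
      fix \<mu> :: "nat \<Rightarrow> real"
      assume H: "\<forall>k. k \<noteq> first_coord \<longrightarrow> (\<Sum>j\<in>A. \<mu> j * peval (pdiff k (f j)) x) = 0"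
      show "\<forall>j\<in>A. \<mu> j = 0"
      proof (cases "A = {}")
        case True thus ?thesis by simp
      next
        case False
        note ni = notin[OF False]
        show ?thesis
        proof (cases "card A = 1")
          case True
          then obtain a where Aa: "A = {a}" by (rule card_1_singletonE)
          from ni True have "\<not> (\<forall>i\<in>A. peval (f i) (cvec x) = 0 \<and>
              (\<forall>k. k \<noteq> first_coord \<longrightarrow> peval (pdiff k (f i)) (cvec x) = 0))"
            unfolding piW1[OF True] by blast
          then obtain k where k: "k \<noteq> first_coord" "peval (pdiff k (f a)) x \<noteq> 0"
            using zerosA Aa by (auto simp: peval_cvec)
          from H k(1) Aa have "\<mu> a * peval (pdiff k (f a)) x = 0" by simp
          then show ?thesis using k(2) Aa by simp
        next
          case c1: False
          show ?thesis
          proof (cases "2 \<le> card A \<and> card A \<le> CARD('n) - 1")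
            case True
            with ni c1 have nex: "\<not> (\<exists>\<mu>::nat \<Rightarrow> complex. (\<exists>j\<in>A. \<mu> j \<noteq> 0) \<and>
                (\<forall>k. k \<noteq> first_coord \<longrightarrow> (\<Sum>j\<in>A. \<mu> j * peval (pdiff k (f j)) (cvec x)) = 0))"
              using zerosA unfolding piW2[OF c1 True] by blast
            have H2: "\<forall>k. k \<noteq> first_coord \<longrightarrow>
                (\<Sum>j\<in>A. complex_of_real (\<mu> j) * peval (pdiff k (f j)) (cvec x)) = 0"
            proof (intro allI impI)
              fix k :: 'n assume "k \<noteq> first_coord"
              then have "complex_of_real (\<Sum>j\<in>A. \<mu> j * peval (pdiff k (f j)) x) = 0" using H by simp
              then show "(\<Sum>j\<in>A. complex_of_real (\<mu> j) * peval (pdiff k (f j)) (cvec x)) = 0"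
                by (simp add: peval_cvec)
            qed
            have "\<not> (\<exists>j\<in>A. complex_of_real (\<mu> j) \<noteq> 0)"
            proof
              assume "\<exists>j\<in>A. complex_of_real (\<mu> j) \<noteq> 0"
              then have "\<exists>\<mu>::nat \<Rightarrow> complex. (\<exists>j\<in>A. \<mu> j \<noteq> 0) \<and>
                (\<forall>k. k \<noteq> first_coord \<longrightarrow> (\<Sum>j\<in>A. \<mu> j * peval (pdiff k (f j)) (cvec x)) = 0)"
                using H2 by (intro exI[where x="\<lambda>j. complex_of_real (\<mu> j)"] conjI) simp_all
              with nex show False by blast
            qed
            then show ?thesis by simp
          next
            case False
            then have "cvec x \<in> piW f A" using c1 zerosA unfolding piW3[OF c1 False] by blast
            with ni show ?thesis by simp
          qed
        qed
      qed
    qed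
    show False using core[OF polys C xcl s ext indep[unfolded A_def]] .
  qed
qed

end
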